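(* Let $E$ be a Banach lattice. Then: (1) every un-convergent net in $E$ has an embedded sequence that is uo-convergent to the same limit. If $E$ has an order continuous norm, then moreover: (2) every un-convergent net in $E$ has an embedded sequence that is uo-convergent as well as un-convergent to the same limit; (3) a sequence in $E$ is un-convergent to $x\in E$ if and only if every subsequence has a further subsequence that is uo-convergent to $x$.
   Context: All vector lattices are real and Archimedean. A net $(x_\alpha)$ in $E$ order converges to $x$ if there is a net $y_\beta\downarrow 0$ such that for each $\beta_0$ there is $\alpha_0$ with $|x_\alpha-x|\leq y_{\beta_0}$ for $\alpha\geq\alpha_0$; it uo-converges to $x$ if $|x_\alpha-x|\wedge|y|$ order converges to $0$ for every $y\in E$. A net $(x_\alpha)$ in a Banach lattice $E$ un-converges to $x$ if $\| |x_\alpha-x|\wedge|y| \|\to0$ for every $y\in E$. Embedded sequence: given a net $(x_\alpha)_{\alpha\in A}$, a sequence $(x_{\alpha_n})_{n\geq1}$ with $\alpha_1\leq\alpha_2\leq\dotsb$ in $A$, where moreover $\alpha_1<\alpha_2<\dotsb$ when $A$ has no largest element (the $\alpha_n$ need not be cofinal). *)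

theory Defs
  imports "HOL-Analysis.Analysis"
begin

text \<open>Banach lattices: a real Banach space which is a vector lattice (ordered real
vector space whose order is a lattice) with a lattice norm.
Archimedeanity is automatic for normed lattices.\<close>

class banach_lattice = banach + ordered_real_vector + lattice +
  assumes lattice_norm: "sup x (- x) \<le> sup y (- y) \<Longrightarrow> norm x \<le> norm y"

definition labs :: "'a::banach_lattice \<Rightarrow> 'a" where
  "labs x = sup x (- x)"

definition directed :: "'i set \<Rightarrow> ('i \<Rightarrow> 'i \<Rightarrow> bool) \<Rightarrow> bool" where
  "directed A le \<longleftrightarrow> A \<noteq> {} \<and> (\<forall>a\<in>A. le a a)
     \<and> (\<forall>a\<in>A. \<forall>b\<in>A. \<forall>c\<in>A. le a b \<longrightarrow> le b c \<longrightarrow> le a c)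
     \<and> (\<forall>a\<in>A. \<forall>b\<in>A. \<exists>c\<in>A. le a c \<and> le b c)"

definition net_decr_to_zero :: "'j set \<Rightarrow> ('j \<Rightarrow> 'j \<Rightarrow> bool) \<Rightarrow> ('j \<Rightarrow> 'a::banach_lattice) \<Rightarrow> bool" where
  "net_decr_to_zero B leB y \<longleftrightarrow> directed B leB
     \<and> (\<forall>b1\<in>B. \<forall>b2\<in>B. leB b1 b2 \<longrightarrow> y b2 \<le> y b1)
     \<and> (\<forall>b\<in>B. 0 \<le> y b) \<and> (\<forall>z. (\<forall>b\<in>B. z \<le> y b) \<longrightarrow> z \<le> 0)"

text \<open>The dominating net is
indexed by a directed subset of the space type itself (any dominating net can be
reindexed by its range, so this is no restriction).\<close>
definition ord_conv :: "'i set \<Rightarrow> ('i \<Rightarrow> 'i \<Rightarrow> bool) \<Rightarrow> ('i \<Rightarrow> 'a::banach_lattice) \<Rightarrow> 'a \<Rightarrow> bool" where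
  "ord_conv A le x l \<longleftrightarrow> (\<exists>(B::'a set) leB y. net_decr_to_zero B leB (y :: 'a \<Rightarrow> 'a)
     \<and> (\<forall>b0\<in>B. \<exists>a0\<in>A. \<forall>a\<in>A. le a0 a \<longrightarrow> labs (x a - l) \<le> y b0))"

definition uo_conv :: "'i set \<Rightarrow> ('i \<Rightarrow> 'i \<Rightarrow> bool) \<Rightarrow> ('i \<Rightarrow> 'a::banach_lattice) \<Rightarrow> 'a \<Rightarrow> bool" where
  "uo_conv A le x l \<longleftrightarrow> (\<forall>u. ord_conv A le (\<lambda>a. inf (labs (x a - l)) (labs u)) 0)"

definition un_conv :: "'i set \<Rightarrow> ('i \<Rightarrow> 'i \<Rightarrow> bool) \<Rightarrow> ('i \<Rightarrow> 'a::banach_lattice) \<Rightarrow> 'a \<Rightarrow> bool" where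
  "un_conv A le x l \<longleftrightarrow> (\<forall>u. \<forall>e>0. \<exists>a0\<in>A. \<forall>a\<in>A. le a0 a \<longrightarrow>
      norm (inf (labs (x a - l)) (labs u)) < e)"

definition embedded_seq :: "'i set \<Rightarrow> ('i \<Rightarrow> 'i \<Rightarrow> bool) \<Rightarrow> (nat \<Rightarrow> 'i) \<Rightarrow> bool" where
  "embedded_seq A le s \<longleftrightarrow> (\<forall>n. s n \<in> A) \<and> (\<forall>n. le (s n) (s (Suc n)))
     \<and> ((\<not> (\<exists>m\<in>A. \<forall>a\<in>A. le a m)) \<longrightarrow> (\<forall>n. \<not> le (s (Suc n)) (s n)))"

definition order_continuous_norm :: "'a::banach_lattice itself \<Rightarrow> bool" where
  "order_continuous_norm _ \<longleftrightarrow> (\<forall>(B::'a set) leB (y :: 'a \<Rightarrow> 'a). net_decr_to_zero B leB y \<longrightarrow>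
     (\<forall>e>0. \<exists>b0\<in>B. \<forall>b\<in>B. leB b0 b \<longrightarrow> norm (y b) < e))"

end

theory Submission
  imports Defs "HOL-Library.Lattice_Algebras"
begin

context banach_lattice begin
subclass lattice_ab_group_add ..
end

lemma labs_nonneg: "0 \<le> labs (a::'a::banach_lattice)"
proof -
  have "0 \<le> labs a + labs a"
  proof -
    have "a + - a \<le> labs a + labs a" unfolding labs_def by (intro add_mono) auto
    then show ?thesis by simp
  qed
  then show ?thesis by simp
qed

lemma labs_id: "0 \<le> (a::'a::banach_lattice) \<Longrightarrow> labs a = a"
  unfolding labs_def by (simp add: sup_absorb1 order_trans[of "-a" 0 a])

lemma norm_mono_lat: "0 \<le> (a::'a::banach_lattice) \<Longrightarrow> a \<le> b \<Longrightarrow> norm a \<le> norm b"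
  by (metis banach_lattice_class.lattice_norm labs_def labs_id order_trans)

lemma norm_labs: "norm (labs (a::'a::banach_lattice)) = norm a"
  by (metis antisym banach_lattice_class.lattice_norm labs_def labs_id labs_nonneg order_refl)

lemma inf_add_le: fixes a b c :: "'a::banach_lattice"
  assumes "0 \<le> a" "0 \<le> b" "0 \<le> c"
  shows "inf c (a + b) \<le> inf c a + inf c b"
proof -
  have "inf c a + inf c b = inf (c + inf c b) (a + inf c b)" by (simp add: add_inf_distrib_right)
  also have "c + inf c b = inf (c + c) (c + b)" by (simp add: add_inf_distrib_left)
  also have "a + inf c b = inf (a + c) (a + b)" by (simp add: add_inf_distrib_left)
  finally have e: "inf c a + inf c b = inf (inf (c + c) (c + b)) (inf (a + c) (a + b))" .
  have "inf c (a + b) \<le> inf (inf (c + c) (c + b)) (inf (a + c) (a + b))"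
  proof (intro le_infI)
    show "inf c (a + b) \<le> c + c" using assms by (intro le_infI1) (simp add: add_increasing)
    show "inf c (a + b) \<le> c + b" using assms by (intro le_infI1) (simp add: add_increasing2)
    show "inf c (a + b) \<le> a + c" using assms by (intro le_infI1) (simp add: add_increasing)
    show "inf c (a + b) \<le> a + b" by simp
  qed
  then show ?thesis using e by simp
qed

lemma scaleR_inf: fixes a b :: "'a::banach_lattice"
  assumes "0 \<le> m" shows "m *\<^sub>R inf a b = inf (m *\<^sub>R a) (m *\<^sub>R b)"
proof (cases "m = 0")
  case True then show ?thesis by simp
next
  case False
  then have m: "0 < m" using assms by simp
  have 1: "m *\<^sub>R inf a b \<le> inf (m *\<^sub>R a) (m *\<^sub>R b)"
    using assms by (auto intro: scaleR_left_mono)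
  have "inverse m *\<^sub>R inf (m *\<^sub>R a) (m *\<^sub>R b) \<le> inf a b"
    using m by (auto intro!: le_infI dest: scaleR_left_mono[of _ _ "inverse m"]
       intro: order_trans[OF scaleR_left_mono[OF inf_le1]] order_trans[OF scaleR_left_mono[OF inf_le2]])
  then have "m *\<^sub>R (inverse m *\<^sub>R inf (m *\<^sub>R a) (m *\<^sub>R b)) \<le> m *\<^sub>R inf a b"
    using assms by (rule scaleR_left_mono)
  then have "inf (m *\<^sub>R a) (m *\<^sub>R b) \<le> m *\<^sub>R inf a b" using m by simp
  with 1 show ?thesis by (rule antisym)
qed

lemma inf_scale_le: fixes z u :: "'a::banach_lattice"
  assumes "0 \<le> z" "1 \<le> m" shows "inf z (m *\<^sub>R u) \<le> m *\<^sub>R inf z u"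
proof -
  have "z \<le> m *\<^sub>R z" using scaleR_right_mono[OF assms(2) assms(1)] by simp
  then have "inf z (m *\<^sub>R u) \<le> inf (m *\<^sub>R z) (m *\<^sub>R u)" by (auto intro: le_infI1)
  then show ?thesis using scaleR_inf[of m z u] assms by simp
qed

lemma inf_pprt_decomp: fixes a b :: "'a::banach_lattice"
  shows "a = inf a b + sup (a - b) 0"
proof -
  have "a - sup (a - b) 0 = a + inf (- (a - b)) (- 0)" by (rule diff_sup_eq_inf)
  also have "\<dots> = inf (a + - (a - b)) (a + - 0)" by (rule add_inf_distrib_left)
  also have "\<dots> = inf a b" by (simp add: inf_commute)
  finally have "a - sup (a - b) 0 = inf a b" .
  then show ?thesis by (metis diff_add_cancel)
qed


lemma pprt_le_labs: "sup (x::'a::banach_lattice) 0 \<le> labs x"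
  using labs_nonneg[of x] unfolding labs_def by (auto intro: le_supI1)
lemma archimedean_lat: fixes a W :: "'a::banach_lattice"
  assumes "0 \<le> a" "\<And>k::nat. real k *\<^sub>R a \<le> W" shows "a = 0"
proof (rule ccontr)
  assume "a \<noteq> 0"
  then have na: "norm a > 0" by simp
  obtain k :: nat where k: "norm W / norm a < real k" using reals_Archimedean2 by blast
  have "norm (real k *\<^sub>R a) \<le> norm W"
    using assms by (intro norm_mono_lat) (auto intro: scaleR_nonneg_nonneg)
  then have "real k * norm a \<le> norm W" by simp
  moreover have "norm W < real k * norm a" using k na by (simp add: field_simps)
  ultimately show False by simp
qed

lemma closed_ge: fixes X :: "nat \<Rightarrow> 'a::banach_lattice"
  assumes "X \<longlonglongrightarrow> L" "\<And>n. a \<le> X n" shows "a \<le> L"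
proof -
  have b: "norm (sup (a - L) 0) \<le> norm (X n - L)" for n
  proof -
    have "a - L \<le> X n - L" using assms(2)[of n] by (rule diff_right_mono)
    then have "sup (a - L) 0 \<le> sup (X n - L) 0" by (rule sup_mono) simp
    also have "\<dots> \<le> labs (X n - L)" by (rule pprt_le_labs)
    finally have "norm (sup (a - L) 0) \<le> norm (labs (X n - L))" by (intro norm_mono_lat) auto
    then show ?thesis by (simp add: norm_labs)
  qed
  have "(\<lambda>n. norm (X n - L)) \<longlonglongrightarrow> 0" using assms(1) by (simp add: LIM_zero_iff tendsto_norm_zero_iff)
  then have "norm (sup (a - L) 0) \<le> 0" using b by (intro tendsto_lowerbound) (auto intro: always_eventually)
  then have "sup (a - L) 0 = 0" by simp
  then have "a - L \<le> 0" by (metis sup.cobounded1)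
  then show ?thesis by simp
qed

lemma nonneg_series_partial: fixes f :: "nat \<Rightarrow> 'a::banach_lattice"
  assumes "\<And>n. 0 \<le> f n" "summable f"
  shows "sum f {..<n} \<le> suminf f"
proof -
  have lim: "(\<lambda>k. sum f {..<k + n}) \<longlonglongrightarrow> suminf f"
    using summable_LIMSEQ[OF assms(2)] by (rule LIMSEQ_ignore_initial_segment)
  have "sum f {..<n} \<le> sum f {..<k + n}" for k
  proof (rule sum_mono2)
    show "finite {..<k + n}" by simp
    show "{..<n} \<subseteq> {..<k + n}" by auto
    show "\<And>b. b \<in> {..<k + n} - {..<n} \<Longrightarrow> 0 \<le> f b" by (rule assms(1))
  qed
  then show ?thesis using lim by (metis closed_ge)
qed

lemma nonneg_series: fixes f :: "nat \<Rightarrow> 'a::banach_lattice"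
  assumes "\<And>n. 0 \<le> f n" "summable f"
  shows "sum f {..<n} \<le> suminf f" "0 \<le> suminf f" "f n \<le> suminf f"
proof -
  show 1: "sum f {..<n} \<le> suminf f" by (rule nonneg_series_partial[OF assms])
  have "0 \<le> sum f {..<n}" by (rule sum_nonneg) (rule assms(1))
  then show "0 \<le> suminf f" using 1 by (rule order_trans)
  have "f n \<le> sum f {..<n} + f n" using \<open>0 \<le> sum f {..<n}\<close> by (rule add_increasing) simp
  also have "\<dots> = sum f {..<Suc n}" by simp
  also have "\<dots> \<le> suminf f" by (rule nonneg_series_partial[OF assms])
  finally show "f n \<le> suminf f" .
qed

lemma pprt_disj: "inf (sup (x::'a::banach_lattice) 0) (sup (- x) 0) = 0"
proof -
  have "sup x 0 + - x = sup (x + - x) (0 + - x)" by (rule add_sup_distrib_right)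
  then have "sup (-x) 0 = sup x 0 - x" by (simp add: sup_commute)
  then have h1: "inf (sup x 0) (sup (- x) 0) = sup x 0 + inf 0 (- x)"
    by (simp add: add_inf_distrib_left)
  have h2: "inf 0 (- x) = - sup x 0" by (metis neg_sup_eq_inf minus_zero sup_commute)
  show ?thesis unfolding h1 h2 by (rule add.right_inverse)
qed

lemma key_small: fixes u W :: "'a::banach_lattice"
  assumes "0 \<le> u" "0 \<le> W" "1 \<le> m"
  shows "m *\<^sub>R inf (sup (W - m *\<^sub>R u) 0) u \<le> W"
proof -
  define p where "p = sup (W - m *\<^sub>R u) 0"
  define q where "q = sup (m *\<^sub>R u - W) 0"
  define t where "t = inf p u"
  have p0: "0 \<le> p" "0 \<le> q" unfolding p_def q_def by auto
  have pq: "inf p q = 0" unfolding p_def q_def using pprt_disj[of "W - m *\<^sub>R u"] by simp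
  have t0: "0 \<le> t" unfolding t_def using p0 assms by simp
  have mt0: "0 \<le> m *\<^sub>R t" using t0 assms by (intro scaleR_nonneg_nonneg) auto
  have "m *\<^sub>R t \<le> m *\<^sub>R u" using assms unfolding t_def by (intro scaleR_left_mono) auto
  also have "m *\<^sub>R u \<le> W + q"
  proof -
    have "m *\<^sub>R u - W \<le> q" unfolding q_def by (rule sup.cobounded1)
    then show ?thesis by (simp add: algebra_simps)
  qed
  finally have 1: "m *\<^sub>R t \<le> W + q" .
  have "inf q (m *\<^sub>R t) \<le> inf q (m *\<^sub>R p)"
    using assms unfolding t_def by (intro inf_mono scaleR_left_mono) auto
  also have "\<dots> \<le> m *\<^sub>R inf q p" using p0 assms by (intro inf_scale_le) auto
  also have "\<dots> = 0" using pq by (simp add: inf_commute)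
  finally have 2: "inf (m *\<^sub>R t) q \<le> 0" by (simp add: inf_commute)
  have "m *\<^sub>R t = inf (m *\<^sub>R t) (W + q)" using 1 by (simp add: inf_absorb1)
  also have "\<dots> \<le> inf (m *\<^sub>R t) W + inf (m *\<^sub>R t) q" using assms p0 mt0 by (intro inf_add_le) auto
  also have "\<dots> \<le> W + 0" using 2 by (intro add_mono) auto
  finally show ?thesis unfolding t_def p_def by simp
qed


lemma uo_from_u: fixes z :: "nat \<Rightarrow> 'a::banach_lattice" and u w :: 'a
  assumes z0: "\<And>n. 0 \<le> z n" and u0: "0 \<le> u"
    and zu: "\<And>n. \<exists>C\<ge>1. z n \<le> C *\<^sub>R u"
    and sg: "summable (\<lambda>n. norm (inf (z n) u))"
  shows "ord_conv UNIV (\<le>) (\<lambda>n. inf (z n) (labs w)) 0"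
proof -
  define W where "W = labs w"
  have W0: "0 \<le> W" by (simp add: W_def labs_nonneg)
  define s where "s n = inf (z n) W" for n
  have s0: "0 \<le> s n" for n using z0 W0 by (simp add: s_def)
  define U where "U = {d. \<exists>N. \<forall>n\<ge>N. s n \<le> d}"
  have WU: "W \<in> U" unfolding U_def s_def by auto
  have lowb: "h \<le> 0" if h: "\<forall>d\<in>U. h \<le> d" for h
  proof -
    define g where "g n = inf (z n) u" for n
    have g0: "0 \<le> g n" for n using z0 u0 by (simp add: g_def)
    have sumg: "summable g" using sg unfolding g_def by (rule summable_norm_cancel)
    define v where "v N = suminf (\<lambda>k. g (k + N))" for N
    have sumgN: "summable (\<lambda>k. g (k + N))" for N using sumg by (rule summable_ignore_initial_segment)
    have v0: "0 \<le> v N" for N unfolding v_def by (rule nonneg_series(2)[OF g0 sumgN])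
    have gv: "g n \<le> v N" if "N \<le> n" for n N
    proof -
      have "g ((n - N) + N) \<le> v N" unfolding v_def by (rule nonneg_series(3)[OF g0 sumgN])
      then show ?thesis using that by simp
    qed
    have vsmall: "\<exists>N. norm (v N) < r" if "r > 0" for r
      using suminf_exist_split[OF that sumg] unfolding v_def by blast
    define p where "p m = sup (W - m *\<^sub>R u) 0" for m :: real
    have p0: "0 \<le> p m" for m unfolding p_def by simp
    have pU: "m *\<^sub>R v N + p m \<in> U" if m: "1 \<le> m" for m N
    proof -
      have "s n \<le> m *\<^sub>R v N + p m" if n: "N \<le> n" for n
      proof -
        have mu0: "0 \<le> m *\<^sub>R u" using m u0 by (intro scaleR_nonneg_nonneg) auto
        have "s n = inf (z n) (inf W (m *\<^sub>R u) + p m)"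
          unfolding s_def p_def using inf_pprt_decomp[of W "m *\<^sub>R u"] by simp
        also have "\<dots> \<le> inf (z n) (inf W (m *\<^sub>R u)) + inf (z n) (p m)"
          using W0 mu0 z0 p0 by (intro inf_add_le) auto
        also have "\<dots> \<le> inf (z n) (m *\<^sub>R u) + p m"
          by (intro add_mono inf_mono) auto
        also have "\<dots> \<le> m *\<^sub>R g n + p m"
          unfolding g_def using z0 m by (intro add_mono inf_scale_le) auto
        also have "\<dots> \<le> m *\<^sub>R v N + p m"
          using gv[OF n] m by (intro add_mono scaleR_left_mono) auto
        finally show ?thesis .
      qed
      then show ?thesis unfolding U_def by blast
    qed
    have hp: "h \<le> p m" if m: "1 \<le> m" for m
    proof -
      define c where "c = sup (h - p m) 0"
      have c0: "0 \<le> c" unfolding c_def by simp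
      have cb: "norm c \<le> m * norm (v N)" for N
      proof -
        have "h \<le> m *\<^sub>R v N + p m" using h pU[OF m] by blast
        then have "h - p m \<le> m *\<^sub>R v N" by (simp add: algebra_simps)
        moreover have "0 \<le> m *\<^sub>R v N" using m v0 by (intro scaleR_nonneg_nonneg) auto
        ultimately have "c \<le> m *\<^sub>R v N" unfolding c_def by (rule sup_least)
        then have "norm c \<le> norm (m *\<^sub>R v N)" using c0 by (rule norm_mono_lat[rotated])
        then show ?thesis using m by simp
      qed
      have "norm c = 0"
      proof (rule ccontr)
        assume "norm c \<noteq> 0"
        then have cp: "norm c > 0" by simp
        obtain N where N: "norm (v N) < norm c / m" using vsmall cp m by force
        then have "m * norm (v N) < norm c" using m by (simp add: field_simps)
        with cb[of N] show False by simp
      qed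
      then have "c = 0" by simp
      then have "h - p m \<le> 0" unfolding c_def by (metis sup.cobounded1)
      then show ?thesis by simp
    qed
    define hp where "hp = sup h 0"
    have hp0: "0 \<le> hp" unfolding hp_def by simp
    define t where "t = inf hp u"
    have t0: "0 \<le> t" unfolding t_def using hp0 u0 by simp
    have tW: "real k *\<^sub>R t \<le> W" for k
    proof (cases "k = 0")
      case True then show ?thesis using W0 by simp
    next
      case False
      then have k1: "1 \<le> real k" by simp
      have "hp \<le> p (real k)" unfolding hp_def using hp[OF k1] p0 by (rule sup_least)
      then have "t \<le> inf (p (real k)) u" unfolding t_def by (intro inf_mono) auto
      then have "real k *\<^sub>R t \<le> real k *\<^sub>R inf (p (real k)) u" by (intro scaleR_left_mono) auto
      also have "\<dots> \<le> W" unfolding p_def using u0 W0 k1 by (rule key_small)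
      finally show ?thesis .
    qed
    have t00: "t = 0" using archimedean_lat[OF t0 tW] .
    have hz: "inf (z n) hp = 0" for n
    proof -
      obtain C where C: "1 \<le> C" "z n \<le> C *\<^sub>R u" using zu by blast
      have "inf hp (z n) \<le> inf hp (C *\<^sub>R u)" using C by (intro inf_mono) auto
      also have "\<dots> \<le> C *\<^sub>R inf hp u" using hp0 C by (intro inf_scale_le) auto
      also have "\<dots> = 0" using t00 unfolding t_def by simp
      finally have "inf hp (z n) \<le> 0" .
      moreover have "0 \<le> inf hp (z n)" using hp0 z0 by simp
      ultimately show ?thesis by (simp add: inf_commute)
    qed
    have hk: "real k *\<^sub>R hp \<le> W" for k
    proof (induction k)
      case 0 then show ?case using W0 by simp
    next
      case (Suc k)
      define d where "d = W - real k *\<^sub>R hp"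
      have d0: "0 \<le> d" unfolding d_def using Suc by simp
      have khp0: "0 \<le> real k *\<^sub>R hp" using hp0 by (intro scaleR_nonneg_nonneg) auto
      have zk: "inf (z n) (real k *\<^sub>R hp) \<le> 0" for n
      proof (cases "k = 0")
        case True then show ?thesis by simp
      next
        case False
        then have "inf (z n) (real k *\<^sub>R hp) \<le> real k *\<^sub>R inf (z n) hp"
          using z0 by (intro inf_scale_le) auto
        then show ?thesis using hz by simp
      qed
      have "s n \<le> d" for n
      proof -
        have "s n = inf (z n) (d + real k *\<^sub>R hp)" unfolding s_def d_def by simp
        also have "\<dots> \<le> inf (z n) d + inf (z n) (real k *\<^sub>R hp)"
          using d0 khp0 z0 by (intro inf_add_le) auto
        also have "\<dots> \<le> d + 0" using zk[of n] by (intro add_mono) auto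
        finally show ?thesis by simp
      qed
      then have "d \<in> U" unfolding U_def by blast
      then have "h \<le> d" using h by blast
      then have "hp \<le> d" unfolding hp_def using d0 by (rule sup_least)
      then show ?case unfolding d_def by (simp add: algebra_simps)
    qed
    have "hp = 0" using archimedean_lat[OF hp0 hk] .
    then show "h \<le> 0" unfolding hp_def by (metis sup.cobounded1)
  qed
  show ?thesis unfolding ord_conv_def
  proof (intro exI conjI)
    show "net_decr_to_zero U (\<lambda>d1 d2. d2 \<le> d1) id"
      unfolding net_decr_to_zero_def directed_def
    proof (intro conjI ballI allI impI)
      show "U \<noteq> {}" using WU by blast
      show "\<exists>c\<in>U. c \<le> a \<and> c \<le> b" if ab: "a \<in> U" "b \<in> U" for a b
      proof -
        obtain Na Nb where "\<forall>n\<ge>Na. s n \<le> a" "\<forall>n\<ge>Nb. s n \<le> b" using ab unfolding U_def by blast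
        then have "\<forall>n\<ge>max Na Nb. s n \<le> inf a b" by auto
        then have "inf a b \<in> U" unfolding U_def by blast
        then show ?thesis by (intro bexI[of _ "inf a b"]) auto
      qed
      show "0 \<le> id b" if bU: "b \<in> U" for b
      proof -
        obtain N where "\<forall>n\<ge>N. s n \<le> b" using bU unfolding U_def by blast
        then have "s N \<le> b" by simp
        then show ?thesis using s0[of N] by simp
      qed
      show "z' \<le> 0" if "\<forall>b\<in>U. z' \<le> id b" for z' using lowb that by simp
    qed auto
    show "\<forall>b0\<in>U. \<exists>a0\<in>UNIV. \<forall>a\<in>UNIV. a0 \<le> a \<longrightarrow> labs (inf (z a) (labs w) - 0) \<le> id b0"
    proof
      fix b0 assume "b0 \<in> U"
      then obtain N where "\<forall>n\<ge>N. s n \<le> b0" unfolding U_def by blast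
      then show "\<exists>a0\<in>UNIV. \<forall>a\<in>UNIV. a0 \<le> a \<longrightarrow> labs (inf (z a) (labs w) - 0) \<le> id b0"
        using s0 by (auto simp: labs_id s_def W_def)
    qed
  qed
qed


lemma part1: fixes A :: "'i set" and x :: "'i \<Rightarrow> 'a::banach_lattice"
  assumes dir: "directed A le" and un: "un_conv A le x l"
  shows "\<exists>s. embedded_seq A le s \<and> uo_conv UNIV (\<le>) (x \<circ> s) l"
proof -
  define z where "z a = labs (x a - l)" for a
  have z0: "0 \<le> z a" for a unfolding z_def by (rule labs_nonneg)
  define nomax where "nomax \<longleftrightarrow> \<not> (\<exists>m\<in>A. \<forall>a\<in>A. le a m)"
  have refl: "\<And>a. a \<in> A \<Longrightarrow> le a a" and trans: "\<And>a b c. a \<in> A \<Longrightarrow> b \<in> A \<Longrightarrow> c \<in> A \<Longrightarrow> le a b \<Longrightarrow> le b c \<Longrightarrow> le a c"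
    and ub: "\<And>a b. a \<in> A \<Longrightarrow> b \<in> A \<Longrightarrow> \<exists>c\<in>A. le a c \<and> le b c" and ne: "A \<noteq> {}"
    using dir unfolding directed_def by blast+
  have ex: "\<exists>a'. a' \<in> A \<and> le a a' \<and> norm (inf (z a') (labs S)) < e \<and> (nomax \<longrightarrow> \<not> le a' a)"
    if aA: "a \<in> A" and e: "e > 0" for a S e
  proof -
    obtain a0 where a0: "a0 \<in> A" "\<forall>b\<in>A. le a0 b \<longrightarrow> norm (inf (z b) (labs S)) < e"
      using un e unfolding un_conv_def z_def by blast
    obtain c where c: "c \<in> A" "le a c" "nomax \<longrightarrow> \<not> le c a"
    proof (cases nomax)
      case True
      then obtain b where b: "b \<in> A" "\<not> le b a" using aA unfolding nomax_def by blast
      obtain c where c: "c \<in> A" "le a c" "le b c" using ub[OF aA b(1)] by blast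
      have "\<not> le c a" using trans[OF b(1) c(1) aA c(3)] b(2) by blast
      then show ?thesis using that c by blast
    next
      case False
      then show ?thesis using that aA refl by blast
    qed
    obtain a' where a': "a' \<in> A" "le c a'" "le a0 a'" using ub[OF c(1) a0(1)] by blast
    have "le a a'" using trans[OF aA c(1) a'(1) c(2) a'(2)] .
    moreover have "nomax \<longrightarrow> \<not> le a' a" using trans[OF c(1) a'(1) aA a'(2)] c(3) by blast
    ultimately show ?thesis using a' a0 by blast
  qed
  define Q where "Q n a S a' \<longleftrightarrow> a' \<in> A \<and> le a a' \<and> norm (inf (z a') (labs S)) < (1/2::real)^(Suc n) \<and> (nomax \<longrightarrow> \<not> le a' a)"
    for n a S a'
  define nxt where "nxt n a S = (SOME a'. Q n a S a')" for n a S
  have nxt: "Q n a S (nxt n a S)" if "a \<in> A" for n a S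
    unfolding nxt_def using ex[OF that, of "(1/2::real)^(Suc n)" S] unfolding Q_def by (rule someI_ex) simp
  obtain a1 where a1: "a1 \<in> A" using ne by blast
  define c where "c a k = ((1/2::real)^k / (1 + norm (z a))) *\<^sub>R z a" for a and k :: nat
  define st where "st = rec_nat (a1, c a1 0) (\<lambda>n (a, P). (nxt n a P, P + c (nxt n a P) (Suc n)))"
  define \<alpha> where "\<alpha> n = fst (st n)" for n
  define P where "P n = snd (st n)" for n
  have st0: "\<alpha> 0 = a1" "P 0 = c a1 0" unfolding \<alpha>_def P_def st_def by simp_all
  have stS: "\<alpha> (Suc n) = nxt n (\<alpha> n) (P n)" "P (Suc n) = P n + c (\<alpha> (Suc n)) (Suc n)" for n
    unfolding \<alpha>_def P_def st_def by (simp_all add: case_prod_beta)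
  define f where "f k = c (\<alpha> k) k" for k
  have Pf: "P n = sum f {..<Suc n}" for n
    by (induction n) (simp_all add: st0 stS f_def)
  have \<alpha>A: "\<alpha> n \<in> A" for n
  proof (induction n)
    case 0 then show ?case using st0 a1 by simp
  next
    case (Suc n) then show ?case using nxt[OF Suc, of n "P n"] stS unfolding Q_def by simp
  qed
  have Qn: "Q n (\<alpha> n) (P n) (\<alpha> (Suc n))" for n using nxt[OF \<alpha>A[of n]] stS by simp
  have f0: "0 \<le> f k" for k unfolding f_def c_def using z0 by (intro scaleR_nonneg_nonneg) auto
  have fn: "norm (f k) \<le> (1/2::real)^k" for k
  proof -
    have "norm (f k) = (1/2::real)^k * (norm (z (\<alpha> k)) / (1 + norm (z (\<alpha> k))))"
      unfolding f_def c_def by simp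
    also have "\<dots> \<le> (1/2::real)^k * 1"
    proof (intro mult_left_mono)
      show "norm (z (\<alpha> k)) / (1 + norm (z (\<alpha> k))) \<le> 1"
        by (smt (verit) divide_le_eq_1 norm_ge_zero)
    qed simp
    finally show ?thesis by simp
  qed
  have geo: "summable (\<lambda>k. (1/2::real)^k)" by (rule summable_geometric) simp
  have snf: "summable (\<lambda>k. norm (f k))"
    by (rule summable_comparison_test[OF _ geo]) (use fn in auto)
  have sf: "summable f" using snf by (rule summable_norm_cancel)
  define u where "u = suminf f"
  have u0: "0 \<le> u" unfolding u_def by (rule nonneg_series(2)[OF f0 sf])
  have small: "norm (inf (z (\<alpha> n)) (sum f {..<n})) \<le> (1/2::real)^n" for n
  proof (cases n)
    case 0 then show ?thesis using z0 by (simp add: inf_absorb2)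
  next
    case (Suc m)
    have "0 \<le> sum f {..<Suc m}" using f0 by (intro sum_nonneg) auto
    then have "labs (P m) = sum f {..<Suc m}" using Pf labs_id by simp
    then show ?thesis using Qn[of m] Suc unfolding Q_def by simp
  qed
  have zu: "\<exists>C\<ge>1. z (\<alpha> n) \<le> C *\<^sub>R u" for n
  proof -
    define C where "C = (1 + norm (z (\<alpha> n))) / (1/2::real)^n"
    have "(1/2::real)^n \<le> 1" by (simp add: power_le_one)
    then have C1: "1 \<le> C" unfolding C_def by (simp add: field_simps) (intro add_increasing2, simp_all)
    have pos: "(2::real)^n + norm (z (\<alpha> n)) * 2^n > 0" by (intro add_pos_nonneg) auto
    have "z (\<alpha> n) = C *\<^sub>R f n" unfolding C_def f_def c_def
      using pos by (simp add: field_simps)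
    also have "\<dots> \<le> C *\<^sub>R u" unfolding u_def using C1 nonneg_series(3)[OF f0 sf]
      by (intro scaleR_left_mono) auto
    finally show ?thesis using C1 by blast
  qed
  have gb: "norm (inf (z (\<alpha> n)) u) \<le> 3 * (1/2::real)^n" for n
  proof -
    define T where "T = suminf (\<lambda>k. f (k + n))"
    have sfn: "summable (\<lambda>k. f (k + n))" using sf by (rule summable_ignore_initial_segment)
    have T0: "0 \<le> T" unfolding T_def by (rule nonneg_series(2)[OF f0 sfn])
    have uT: "u = sum f {..<n} + T" unfolding u_def T_def using suminf_split_initial_segment[OF sf, of n] by simp
    have S0: "0 \<le> sum f {..<n}" using f0 by (intro sum_nonneg) auto
    have "norm T \<le> (\<Sum>k. norm (f (k + n)))"
      unfolding T_def by (rule summable_norm) (rule summable_ignore_initial_segment[OF snf])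
    also have "\<dots> \<le> (\<Sum>k. (1/2::real)^k * (1/2)^n)"
      by (intro suminf_le summable_ignore_initial_segment[OF snf] summable_mult2 geo)
         (metis fn power_add)
    also have "\<dots> = 2 * (1/2::real)^n" using suminf_mult2[OF geo, of "(1/2::real)^n"] suminf_geometric[of "1/2::real"]
      by simp
    finally have nT: "norm T \<le> 2 * (1/2::real)^n" .
    have "inf (z (\<alpha> n)) u \<le> inf (z (\<alpha> n)) (sum f {..<n}) + inf (z (\<alpha> n)) T"
      unfolding uT using S0 T0 z0 by (intro inf_add_le) auto
    also have "\<dots> \<le> inf (z (\<alpha> n)) (sum f {..<n}) + T" by (intro add_mono) auto
    finally have "norm (inf (z (\<alpha> n)) u) \<le> norm (inf (z (\<alpha> n)) (sum f {..<n}) + T)"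
      using z0 u0 by (intro norm_mono_lat) auto
    also have "\<dots> \<le> norm (inf (z (\<alpha> n)) (sum f {..<n})) + norm T" by (rule norm_triangle_ineq)
    also have "\<dots> \<le> 3 * (1/2::real)^n" using small[of n] nT by simp
    finally show ?thesis .
  qed
  have sg: "summable (\<lambda>n. norm (inf (z (\<alpha> n)) u))"
    by (rule summable_comparison_test[OF _ summable_mult[OF geo, of 3]]) (use gb in auto)
  have uo: "uo_conv UNIV (\<le>) (x \<circ> \<alpha>) l"
    unfolding uo_conv_def
  proof
    fix w
    have "ord_conv UNIV (\<le>) (\<lambda>n. inf (z (\<alpha> n)) (labs w)) 0"
      by (rule uo_from_u[OF z0 u0 zu sg])
    then show "ord_conv UNIV (\<le>) (\<lambda>a. inf (labs ((x \<circ> \<alpha>) a - l)) (labs w)) 0"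
      unfolding z_def by simp
  qed
  have "embedded_seq A le \<alpha>"
    unfolding embedded_seq_def using \<alpha>A Qn unfolding Q_def nomax_def by blast
  with uo show ?thesis by blast
qed


lemma uo_un: fixes y :: "nat \<Rightarrow> 'a::banach_lattice"
  assumes ocn: "order_continuous_norm TYPE('a)" and uo: "uo_conv UNIV (\<le>) y l"
  shows "un_conv UNIV (\<le>) y l"
  unfolding un_conv_def
proof (intro allI impI)
  fix u :: 'a and e :: real assume e: "e > 0"
  have "ord_conv UNIV (\<le>) (\<lambda>a. inf (labs (y a - l)) (labs u)) 0" using uo unfolding uo_conv_def by blast
  then obtain B leB yb where nd: "net_decr_to_zero B leB (yb :: 'a \<Rightarrow> 'a)"
    and dom: "\<forall>b0\<in>B. \<exists>a0\<in>UNIV. \<forall>a\<in>UNIV. a0 \<le> a \<longrightarrow> labs (inf (labs (y a - l)) (labs u) - 0) \<le> yb b0"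
    unfolding ord_conv_def by blast
  obtain b0 where b0: "b0 \<in> B" "\<forall>b\<in>B. leB b0 b \<longrightarrow> norm (yb b) < e"
    using ocn nd e unfolding order_continuous_norm_def by blast
  have "leB b0 b0" using nd b0(1) unfolding net_decr_to_zero_def directed_def by blast
  then have nb: "norm (yb b0) < e" using b0 by blast
  obtain a0 where a0: "\<forall>a. a0 \<le> a \<longrightarrow> labs (inf (labs (y a - l)) (labs u) - 0) \<le> yb b0"
    using dom b0(1) by blast
  have "\<forall>a\<in>UNIV. a0 \<le> a \<longrightarrow> norm (inf (labs (y a - l)) (labs u)) < e"
  proof (intro ballI impI)
    fix a :: nat assume "a0 \<le> a"
    then have le: "labs (inf (labs (y a - l)) (labs u)) \<le> yb b0" using a0 by simp
    have "norm (inf (labs (y a - l)) (labs u)) = norm (labs (inf (labs (y a - l)) (labs u)))"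
      by (simp add: norm_labs)
    also have "\<dots> \<le> norm (yb b0)" using le by (intro norm_mono_lat labs_nonneg)
    finally show "norm (inf (labs (y a - l)) (labs u)) < e" using nb by simp
  qed
  then show "\<exists>a0\<in>UNIV. \<forall>a\<in>UNIV. a0 \<le> a \<longrightarrow> norm (inf (labs (y a - l)) (labs u)) < e" by blast
qed

lemma un_subseq: fixes x :: "nat \<Rightarrow> 'a::banach_lattice" and r :: "nat \<Rightarrow> nat"
  assumes "un_conv UNIV (\<le>) x l" "strict_mono r"
  shows "un_conv UNIV (\<le>) (x \<circ> r) l"
  unfolding un_conv_def
proof (intro allI impI)
  fix u :: 'a and e :: real assume "e > 0"
  then obtain a0 where a0: "\<forall>a. a0 \<le> a \<longrightarrow> norm (inf (labs (x a - l)) (labs u)) < e"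
    using assms(1) unfolding un_conv_def by blast
  have "\<forall>a. a0 \<le> a \<longrightarrow> norm (inf (labs ((x \<circ> r) a - l)) (labs u)) < e"
    using a0 seq_suble[OF assms(2)] by (metis comp_apply order_trans)
  then show "\<exists>a0\<in>UNIV. \<forall>a\<in>UNIV. a0 \<le> a \<longrightarrow> norm (inf (labs ((x \<circ> r) a - l)) (labs u)) < e" by blast
qed

lemma directed_nat: "directed (UNIV :: nat set) (\<le>)"
  unfolding directed_def by (auto intro: order_trans) (meson le_cases order_refl)

lemma embedded_nat: "embedded_seq (UNIV :: nat set) (\<le>) s \<Longrightarrow> strict_mono s"
  unfolding embedded_seq_def strict_mono_Suc_iff
  by (metis UNIV_I le_less_linear less_Suc_eq_le not_less_eq_eq)

lemma part3_fwd: fixes x :: "nat \<Rightarrow> 'a::banach_lattice"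
  assumes un: "un_conv UNIV (\<le>) x l" and r: "strict_mono (r :: nat \<Rightarrow> nat)"
  shows "\<exists>q :: nat \<Rightarrow> nat. strict_mono q \<and> uo_conv UNIV (\<le>) (x \<circ> r \<circ> q) l"
proof -
  have "un_conv UNIV (\<le>) (x \<circ> r) l" by (rule un_subseq[OF un r])
  from part1[OF directed_nat this] obtain s :: "nat \<Rightarrow> nat" where
    s: "embedded_seq UNIV (\<le>) s" "uo_conv UNIV (\<le>) (x \<circ> r \<circ> s) l" by blast
  have "strict_mono s" by (rule embedded_nat[OF s(1)])
  with s(2) show ?thesis by blast
qed

lemma part3_bwd: fixes x :: "nat \<Rightarrow> 'a::banach_lattice"
  assumes ocn: "order_continuous_norm TYPE('a)"
    and R: "\<forall>r :: nat \<Rightarrow> nat. strict_mono r \<longrightarrow> (\<exists>q :: nat \<Rightarrow> nat. strict_mono q \<and> uo_conv UNIV (\<le>) (x \<circ> r \<circ> q) l)"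
  shows "un_conv UNIV (\<le>) x l"
proof (rule ccontr)
  assume "\<not> un_conv UNIV (\<le>) x l"
  then obtain u :: 'a and e :: real where e: "e > 0"
    and bad: "\<And>a0. \<exists>a. a0 \<le> a \<and> \<not> norm (inf (labs (x a - l)) (labs u)) < e"
    unfolding un_conv_def by (auto simp: not_less)
  define F where "F a0 = (SOME a. a0 \<le> a \<and> \<not> norm (inf (labs (x a - l)) (labs u)) < e)" for a0
  have F: "a0 \<le> F a0 \<and> \<not> norm (inf (labs (x (F a0) - l)) (labs u)) < e" for a0
    unfolding F_def by (rule someI_ex) (rule bad)
  define r where "r n = rec_nat (F 0) (\<lambda>_ p. F (Suc p)) n" for n
  have r0: "r 0 = F 0" unfolding r_def by simp
  have rS: "r (Suc n) = F (Suc (r n))" for n unfolding r_def by simp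
  have rb: "\<not> norm (inf (labs (x (r n) - l)) (labs u)) < e" for n
  proof (cases n)
    case 0 then show ?thesis using F[of 0] r0 by simp
  next
    case (Suc m) then show ?thesis using F[of "Suc (r m)"] rS[of m] by simp
  qed
  have "r n < r (Suc n)" for n using F[of "Suc (r n)"] rS[of n] by simp
  then have smr: "strict_mono r" by (rule strict_monoI_Suc)
  obtain q :: "nat \<Rightarrow> nat" where q: "strict_mono q" "uo_conv UNIV (\<le>) (x \<circ> r \<circ> q) l"
    using R[rule_format, OF smr] by blast
  have "un_conv UNIV (\<le>) (x \<circ> r \<circ> q) l" using uo_un[OF ocn q(2)] .
  then obtain a0 :: nat where "\<forall>a\<in>UNIV. a0 \<le> a \<longrightarrow> norm (inf (labs ((x \<circ> r \<circ> q) a - l)) (labs u)) < e"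
    using e unfolding un_conv_def by blast
  then have "norm (inf (labs (x (r (q a0)) - l)) (labs u)) < e" by simp
  with rb show False by blast
qed


theorem theorem5p2:
  shows "(\<forall>(A :: 'i set) le (x :: 'i \<Rightarrow> 'a) l. directed A le \<longrightarrow> un_conv A le x l \<longrightarrow>
            (\<exists>s. embedded_seq A le s \<and> uo_conv UNIV (\<le>) (x \<circ> s) l))
       \<and> (order_continuous_norm TYPE('a::banach_lattice) \<longrightarrow>
            (\<forall>(A :: 'i set) le (x :: 'i \<Rightarrow> 'a) l. directed A le \<longrightarrow> un_conv A le x l \<longrightarrow>
              (\<exists>s. embedded_seq A le s \<and> uo_conv UNIV (\<le>) (x \<circ> s) l
                   \<and> un_conv UNIV (\<le>) (x \<circ> s) l))
          \<and> (\<forall>(x :: nat \<Rightarrow> 'a) l. un_conv UNIV (\<le>) x l \<longleftrightarrow>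
              (\<forall>r :: nat \<Rightarrow> nat. strict_mono r \<longrightarrow> (\<exists>q :: nat \<Rightarrow> nat. strict_mono q \<and> uo_conv UNIV (\<le>) (x \<circ> r \<circ> q) l))))"
proof -
  have P1: "\<forall>(A :: 'i set) le (x :: 'i \<Rightarrow> 'a) l. directed A le \<longrightarrow> un_conv A le x l \<longrightarrow>
            (\<exists>s. embedded_seq A le s \<and> uo_conv UNIV (\<le>) (x \<circ> s) l)"
    using part1 by blast
  have P2: "\<forall>(A :: 'i set) le (x :: 'i \<Rightarrow> 'a) l. directed A le \<longrightarrow> un_conv A le x l \<longrightarrow>
              (\<exists>s. embedded_seq A le s \<and> uo_conv UNIV (\<le>) (x \<circ> s) l
                   \<and> un_conv UNIV (\<le>) (x \<circ> s) l)" if ocn: "order_continuous_norm TYPE('a)"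
  proof (intro allI impI)
    fix A :: "'i set" and le x and l :: 'a
    assume "directed A le" "un_conv A le x l"
    from part1[OF this] obtain s :: "nat \<Rightarrow> 'i" where
      s: "embedded_seq A le s" "uo_conv UNIV (\<le>) (x \<circ> s) l" by blast
    have "un_conv UNIV (\<le>) (x \<circ> s) l" by (rule uo_un[OF ocn s(2)])
    with s show "\<exists>s. embedded_seq A le s \<and> uo_conv UNIV (\<le>) (x \<circ> s) l \<and> un_conv UNIV (\<le>) (x \<circ> s) l"
      by blast
  qed
  have P3: "\<forall>(x :: nat \<Rightarrow> 'a) l. un_conv UNIV (\<le>) x l \<longleftrightarrow>
              (\<forall>r :: nat \<Rightarrow> nat. strict_mono r \<longrightarrow> (\<exists>q :: nat \<Rightarrow> nat. strict_mono q \<and> uo_conv UNIV (\<le>) (x \<circ> r \<circ> q) l))"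
    if ocn: "order_continuous_norm TYPE('a)"
  proof (intro allI)
    fix x :: "nat \<Rightarrow> 'a" and l
    show "un_conv UNIV (\<le>) x l \<longleftrightarrow>
              (\<forall>r :: nat \<Rightarrow> nat. strict_mono r \<longrightarrow> (\<exists>q :: nat \<Rightarrow> nat. strict_mono q \<and> uo_conv UNIV (\<le>) (x \<circ> r \<circ> q) l))"
    proof
      assume un: "un_conv UNIV (\<le>) x l"
      show "\<forall>r :: nat \<Rightarrow> nat. strict_mono r \<longrightarrow> (\<exists>q :: nat \<Rightarrow> nat. strict_mono q \<and> uo_conv UNIV (\<le>) (x \<circ> r \<circ> q) l)"
      proof (intro allI impI)
        fix r :: "nat \<Rightarrow> nat" assume "strict_mono r"
        then show "\<exists>q :: nat \<Rightarrow> nat. strict_mono q \<and> uo_conv UNIV (\<le>) (x \<circ> r \<circ> q) l"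
          by (rule part3_fwd[OF un])
      qed
    next
      assume R: "\<forall>r :: nat \<Rightarrow> nat. strict_mono r \<longrightarrow> (\<exists>q :: nat \<Rightarrow> nat. strict_mono q \<and> uo_conv UNIV (\<le>) (x \<circ> r \<circ> q) l)"
      show "un_conv UNIV (\<le>) x l" by (rule part3_bwd[OF ocn R])
    qed
  qed
  show ?thesis using P1 P2 P3 by blast
qed

end
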